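(* Let $\Omega=[-1,1]$, $\mathbb{X}=C([-1,1])$ with the supremum norm, $J=[t_0,t_0+T]$, and assume the standing setup below. For $n\in\mathbb{N}$ let $h_x=2/n$, $x_i=-1+ih_x$ ($i=0,\dots,n$), let $\ell_i$ be the continuous piecewise-linear "hat" functions with $\ell_i(x_j)=\delta_{ij}$ and breakpoints $\{x_j\}$ (supported on $[x_{i-1},x_{i+1}]\cap[-1,1]$), $\mathbb{X}_n=\mathrm{span}\{\ell_0,\dots,\ell_n\}$, and $P_nv=\sum_{j=0}^n v(x_j)\ell_j$. For $u_0\in\mathbb{X}$, let $u$ solve $u'=N(t,u)$, $u(t_0)=u_0$ and $u_n$ solve $u_n'=P_nN(t,u_n)$, $u_n(t_0)=P_nu_0$. Then $\|u-u_n\|_{C(J,\mathbb{X})}\to0$ as $n\to\infty$. If moreover $u\in C(J,C^2([-1,1]))$, there exists a constant $\kappa_u>0$, depending on $u$ but not on $n$, such that $\|u-u_n\|_{C(J,\mathbb{X})}\le\kappa_uh_x^2$, so the error is $O(n^{-2})$.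
   Context: Standing setup: the kernel $w$ on $[-1,1]^2$ satisfies $\lim_{h\to0}\sup_{|x-z|\le h}\int_{-1}^1|w(x,y)-w(z,y)|dy=0$ and $\sup_{x}\int_{-1}^1|w(x,y)|dy<\infty$; $f:\mathbb{R}\to\mathbb{R}$ is bounded, everywhere differentiable and Lipschitz with $f,f'$ bounded; $\xi\in C(J,\mathbb{X})$. $F(u)(x)=f(u(x))$, $(Wu)(x)=\int_{-1}^1w(x,y)u(y)dy$, $N(t,u)=-u+WF(u)+\xi(t)$. Solutions are $C^1(J,\mathbb{X})$ functions satisfying the equation on $J$. $\|v\|_{C(J,\mathbb{X})}=\max_{t\in J}\|v(t)\|_\infty$. *)

theory Defs
  imports "HOL-Analysis.Analysis"
begin

text \<open>Elements of X = C([-1,1]) are represented by functions real => real that are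
 continuous on [-1,1]; only their values on [-1,1] matter.\<close>

definition Xsp :: "(real \<Rightarrow> real) set" where
  "Xsp = {v. continuous_on {-1..1} v}"

definition supn :: "(real \<Rightarrow> real) \<Rightarrow> real" where
  "supn v = (SUP x\<in>{-1..1}. \<bar>v x\<bar>)"

definition normCJX :: "real set \<Rightarrow> (real \<Rightarrow> real \<Rightarrow> real) \<Rightarrow> real" where
  "normCJX J v = (SUP t\<in>J. supn (v t))"

definition contJX :: "real set \<Rightarrow> (real \<Rightarrow> real \<Rightarrow> real) \<Rightarrow> bool" where
  "contJX J v \<longleftrightarrow> (\<forall>t\<in>J. v t \<in> Xsp) \<and>
     (\<forall>t\<in>J. \<forall>e>0. \<exists>d>0. \<forall>s\<in>J. \<bar>s - t\<bar> < d \<longrightarrow> supn (\<lambda>x. v s x - v t x) < e)"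

definition X_deriv :: "real set \<Rightarrow> (real \<Rightarrow> real \<Rightarrow> real) \<Rightarrow> (real \<Rightarrow> real) \<Rightarrow> real \<Rightarrow> bool" where
  "X_deriv J u d t \<longleftrightarrow>
     ((\<lambda>s. supn (\<lambda>x. (u s x - u t x) / (s - t) - d x)) \<longlongrightarrow> 0) (at t within J)"

definition is_solution ::
  "real set \<Rightarrow> real \<Rightarrow> (real \<Rightarrow> (real \<Rightarrow> real) \<Rightarrow> (real \<Rightarrow> real)) \<Rightarrow> (real \<Rightarrow> real)
   \<Rightarrow> (real \<Rightarrow> real \<Rightarrow> real) \<Rightarrow> bool" where
  "is_solution J t0 G u0 u \<longleftrightarrow>
     contJX J u \<and> contJX J (\<lambda>t. G t (u t)) \<and>
     (\<forall>t\<in>J. X_deriv J u (G t (u t)) t) \<and>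
     (\<forall>x\<in>{-1..1}. u t0 x = u0 x)"

definition Wop :: "(real \<Rightarrow> real \<Rightarrow> real) \<Rightarrow> (real \<Rightarrow> real) \<Rightarrow> (real \<Rightarrow> real)" where
  "Wop w v = (\<lambda>x. integral {-1..1} (\<lambda>y. w x y * v y))"

definition Fop :: "(real \<Rightarrow> real) \<Rightarrow> (real \<Rightarrow> real) \<Rightarrow> (real \<Rightarrow> real)" where
  "Fop f v = (\<lambda>x. f (v x))"

definition Nop :: "(real \<Rightarrow> real \<Rightarrow> real) \<Rightarrow> (real \<Rightarrow> real) \<Rightarrow> (real \<Rightarrow> real \<Rightarrow> real)
   \<Rightarrow> real \<Rightarrow> (real \<Rightarrow> real) \<Rightarrow> (real \<Rightarrow> real)" where
  "Nop w f \<xi> t v = (\<lambda>x. - v x + Wop w (Fop f v) x + \<xi> t x)"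

definition hx :: "nat \<Rightarrow> real" where
  "hx n = 2 / real n"

definition node :: "nat \<Rightarrow> nat \<Rightarrow> real" where
  "node n i = -1 + real i * hx n"

definition hat :: "nat \<Rightarrow> nat \<Rightarrow> real \<Rightarrow> real" where
  "hat n i x = max 0 (1 - \<bar>x - node n i\<bar> / hx n)"

definition Pn :: "nat \<Rightarrow> (real \<Rightarrow> real) \<Rightarrow> (real \<Rightarrow> real)" where
  "Pn n v = (\<lambda>x. \<Sum>j=0..n. v (node n j) * hat n j x)"

definition C2_with :: "(real \<Rightarrow> real) \<Rightarrow> (real \<Rightarrow> real) \<Rightarrow> (real \<Rightarrow> real) \<Rightarrow> bool" where
  "C2_with v d1 d2 \<longleftrightarrow>
     (\<forall>x\<in>{-1..1}. (v has_real_derivative d1 x) (at x within {-1..1})) \<and>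
     (\<forall>x\<in>{-1..1}. (d1 has_real_derivative d2 x) (at x within {-1..1})) \<and>
     continuous_on {-1..1} d2"

text \<open>u \<in> C(J, C^2([-1,1])) with the C^2 norm |v| + |v'| + |v''|.\<close>
definition in_CJ_C2 :: "real set \<Rightarrow> (real \<Rightarrow> real \<Rightarrow> real) \<Rightarrow> bool" where
  "in_CJ_C2 J u \<longleftrightarrow> (\<exists>D1 D2. (\<forall>t\<in>J. C2_with (u t) (D1 t) (D2 t)) \<and>
      contJX J u \<and> contJX J D1 \<and> contJX J D2)"

end

theory Submission imports Defs begin

lemma supn_le: fixes v :: "real \<Rightarrow> real" shows "(\<And>x. x\<in>{-1..1} \<Longrightarrow> \<bar>v x\<bar> \<le> c) \<Longrightarrow> supn v \<le> c"
  unfolding supn_def by (rule cSUP_least) auto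

lemma supn_ge_bdd: fixes v :: "real \<Rightarrow> real" shows "(\<And>x. x\<in>{-1..1} \<Longrightarrow> \<bar>v x\<bar> \<le> c) \<Longrightarrow> x\<in>{-1..1} \<Longrightarrow> \<bar>v x\<bar> \<le> supn v"
  unfolding supn_def by (rule cSUP_upper) (auto intro!: bdd_aboveI[of _ c])

lemma cont_bound: fixes v :: "real \<Rightarrow> real" assumes "continuous_on {-1..1::real} v" obtains c where "\<And>x. x\<in>{-1..1} \<Longrightarrow> \<bar>v x\<bar> \<le> c"
proof -
  have "compact (v ` {-1..1})" using assms compact_continuous_image by blast
  then obtain c where "\<forall>y\<in>v ` {-1..1}. norm y \<le> c" using compact_imp_bounded bounded_iff by metis
  then show ?thesis by (intro that[of c]) auto
qed

lemma supn_ge: fixes v :: "real \<Rightarrow> real" shows "continuous_on {-1..1::real} v \<Longrightarrow> x\<in>{-1..1} \<Longrightarrow> \<bar>v x\<bar> \<le> supn v"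
  by (metis cont_bound supn_ge_bdd)

lemma mono_deriv:
  fixes h h' :: "real \<Rightarrow> real"
  assumes "a \<le> b" and d: "\<And>s. s\<in>{a..b} \<Longrightarrow> (h has_real_derivative h' s) (at s within {a..b})"
    and nn: "\<And>s. s\<in>{a..b} \<Longrightarrow> h' s \<ge> 0"
  shows "h a \<le> h b"
proof (rule DERIV_nonneg_imp_increasing_open[OF assms(1)])
  fix x assume "a < x" "x < b"
  then show "\<exists>y. (h has_real_derivative y) (at x) \<and> 0 \<le> y"
    using d[of x] nn[of x] at_within_Icc_at[of a x b] by auto
next
  show "continuous_on {a..b} h"
    using d DERIV_continuous continuous_on_eq_continuous_within by blast
qed

lemma pointwise_deriv:
  assumes cv: "contJX J v" and cd: "continuous_on {-1..1} d" and xd: "X_deriv J v d t"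
    and t: "t \<in> J" and x: "x \<in> {-1..1}"
  shows "((\<lambda>s. v s x) has_real_derivative d x) (at t within J)"
  unfolding has_field_derivative_iff
proof -
  have "((\<lambda>s. (v s x - v t x) / (s - t) - d x) \<longlongrightarrow> 0) (at t within J)"
  proof (rule Lim_null_comparison)
    show "((\<lambda>s. supn (\<lambda>x. (v s x - v t x) / (s - t) - d x)) \<longlongrightarrow> 0) (at t within J)"
      using xd unfolding X_deriv_def .
    have "\<forall>s\<in>J. norm ((v s x - v t x) / (s - t) - d x) \<le> supn (\<lambda>x. (v s x - v t x) / (s - t) - d x)"
    proof
      fix s assume s: "s \<in> J"
      have "continuous_on {-1..1} (v s)" "continuous_on {-1..1} (v t)"
        using cv s t unfolding contJX_def Xsp_def by auto
      then have "continuous_on {-1..1} (\<lambda>x. (v s x - v t x) / (s - t) - d x)"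
        using cd by (cases "s = t") (auto intro!: continuous_intros)
      then show "norm ((v s x - v t x) / (s - t) - d x) \<le> supn (\<lambda>x. (v s x - v t x) / (s - t) - d x)"
        using supn_ge x by auto
    qed
    then show "\<forall>\<^sub>F s in at t within J. norm ((v s x - v t x) / (s - t) - d x) \<le> supn (\<lambda>x. (v s x - v t x) / (s - t) - d x)"
      by (auto simp: eventually_at_filter)
  qed
  then show "((\<lambda>s. (v s x - v t x) / (s - t)) \<longlongrightarrow> d x) (at t within J)"
    using LIM_zero_iff by blast
qed

lemma joint_cont:
  fixes g :: "real \<Rightarrow> real \<Rightarrow> real" and J :: "real set"
  assumes cg: "contJX J g"
  shows "continuous_on (J \<times> {-1..1}) (\<lambda>p. g (fst p) (snd p))"
  unfolding continuous_on_iff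
proof (intro ballI allI impI)
  fix p :: "real \<times> real" and e :: real assume p: "p \<in> J \<times> {-1..1}" and e: "(0::real) < e"
  obtain t x where px: "p = (t,x)" "t \<in> J" "x \<in> {-1..1}" using p by auto
  obtain d1 where d1: "d1 > 0" "\<forall>s\<in>J. \<bar>s - t\<bar> < d1 \<longrightarrow> supn (\<lambda>x. g s x - g t x) < e/2"
    using cg px e unfolding contJX_def by (meson half_gt_zero)
  have ct: "continuous_on {-1..1} (g t)" using cg px unfolding contJX_def Xsp_def by auto
  obtain d2 where d2: "d2 > 0" "\<forall>y\<in>{-1..1}. dist y x < d2 \<longrightarrow> dist (g t y) (g t x) < e/2"
    using ct px e unfolding continuous_on_iff by (meson half_gt_zero)
  show "\<exists>d>0. \<forall>q\<in>J \<times> {-1..1}. dist q p < d \<longrightarrow> dist (g (fst q) (snd q)) (g (fst p) (snd p)) < e"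
  proof (intro exI[of _ "min d1 d2"] conjI ballI impI)
    show "0 < min d1 d2" using d1 d2 by auto
    fix q assume q: "q \<in> J \<times> {-1..1}" and dq: "dist q p < min d1 d2"
    obtain s y where qy: "q = (s,y)" "s \<in> J" "y \<in> {-1..1}" using q by auto
    have "dist s t < d1" using dist_fst_le[of q p] dq qy px by auto
    then have a: "supn (\<lambda>x. g s x - g t x) < e/2" using d1 qy by (auto simp: dist_real_def)
    have cs: "continuous_on {-1..1} (g s)" using cg qy unfolding contJX_def Xsp_def by auto
    have b1: "\<bar>g s y - g t y\<bar> \<le> supn (\<lambda>x. g s x - g t x)"
      using supn_ge[of "\<lambda>x. g s x - g t x" y] cs ct qy by (auto intro: continuous_intros)
    moreover have "dist y x < d2" using dist_snd_le[of q p] dq qy px by auto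
    then have b2: "dist (g t y) (g t x) < e/2" using d2 qy by auto
    have "\<bar>g s y - g t x\<bar> \<le> \<bar>g s y - g t y\<bar> + \<bar>g t y - g t x\<bar>" by linarith
    ultimately show "dist (g (fst q) (snd q)) (g (fst p) (snd p)) < e"
      using a px qy b1 b2 by (simp add: dist_real_def)
  qed
qed


lemma hx_pos: "n \<ge> 1 \<Longrightarrow> hx n > 0" by (simp add: hx_def)

lemma node_in: assumes "n \<ge> 1" "j \<le> n" shows "node n j \<in> {-1..1}"
proof -
  have "real j * (2 / real n) \<le> 2" using assms by (simp add: field_simps)
  moreover have "real j * (2 / real n) \<ge> 0" by simp
  ultimately show ?thesis by (simp add: node_def hx_def)
qed

lemma node_Suc: "node n (Suc i) = node n i + hx n"
  by (simp add: node_def algebra_simps)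

lemma interp_struct:
  assumes n: "n \<ge> 1" and x: "x \<in> {-1..1}"
  shows "\<exists>i<n. node n i \<le> x \<and> x \<le> node n (Suc i) \<and>
     (\<forall>v. Pn n v x = (1 - (x - node n i) / hx n) * v (node n i) + ((x - node n i) / hx n) * v (node n (Suc i)))"
proof -
  define h where "h = hx n"
  have h: "h > 0" using hx_pos n h_def by auto
  have nh: "real n * h = 2" using n by (simp add: h_def hx_def)
  define k where "k = nat \<lfloor>(x+1)/h\<rfloor>"
  define i where "i = min k (n - 1)"
  have x1: "x + 1 \<ge> 0" "x + 1 \<le> 2" using x by auto
  have kle: "real k \<le> (x+1)/h" unfolding k_def using x1 h by (simp add: of_nat_nat)
  have kgt: "(x+1)/h < real k + 1" unfolding k_def using x1 h
    by (simp add: of_nat_nat)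
  have ilt: "i < n" using n unfolding i_def by auto
  have lo: "real i * h \<le> x + 1"
  proof -
    have "real i \<le> real k" unfolding i_def by simp
    then have "real i * h \<le> real k * h" using h by (simp add: mult_right_mono)
    also have "\<dots> \<le> x + 1" using kle h by (simp add: pos_le_divide_eq)
    finally show ?thesis .
  qed
  have hi: "x + 1 \<le> (real i + 1) * h"
  proof (cases "k \<le> n - 1")
    case True
    then have "i = k" unfolding i_def by simp
    then show ?thesis using kgt h by (simp add: pos_divide_less_eq less_imp_le)
  next
    case False
    then have "i = n - 1" unfolding i_def by simp
    then have "real i + 1 = real n" using n by simp
    then show ?thesis using nh x1 by simp
  qed
  have ni: "node n i = -1 + real i * h" by (simp add: node_def h_def)
  have ni1: "node n (Suc i) = node n i + h" by (simp add: node_Suc h_def)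
  have A: "node n i \<le> x" "x \<le> node n (Suc i)" using lo hi ni ni1 by (auto simp: algebra_simps)
  define s where "s = (x - node n i) / h"
  have sh: "s * h = x - node n i" using h by (simp add: s_def)
  have hat0: "hat n j x = 0" if j: "j \<notin> {i, Suc i}" for j
  proof -
    have "\<bar>x - node n j\<bar> \<ge> h"
    proof (cases "j < i")
      case True
      then have "real j + 1 \<le> real i" by simp
      then have "(real j + 1) * h \<le> real i * h" using h by (simp add: mult_right_mono)
      then show ?thesis using A ni by (simp add: node_def h_def[symmetric] algebra_simps)
    next
      case False
      then have "j \<ge> Suc (Suc i)" using j by auto
      then have "real j \<ge> real i + 2" by simp
      then have "real j * h \<ge> (real i + 2) * h" using h by (simp add: mult_right_mono)
      then show ?thesis using A ni ni1 by (simp add: node_def h_def[symmetric] algebra_simps)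
    qed
    then have "1 - \<bar>x - node n j\<bar> / hx n \<le> 0" using h by (simp add: h_def[symmetric] field_simps)
    then show ?thesis by (simp add: hat_def)
  qed
  have hati: "hat n i x = 1 - s"
  proof -
    have "\<bar>x - node n i\<bar> = x - node n i" using A by simp
    moreover have "x - node n i \<le> h" using A ni1 by simp
    ultimately show ?thesis using h by (simp add: hat_def h_def[symmetric] s_def divide_le_eq_1)
  qed
  have hati1: "hat n (Suc i) x = s"
  proof -
    have "\<bar>x - node n (Suc i)\<bar> = node n i + h - x" using A ni1 by simp
    moreover have "x - node n i \<ge> 0" using A by simp
    ultimately have "1 - \<bar>x - node n (Suc i)\<bar> / hx n = s" using h
      by (simp add: h_def[symmetric] s_def field_simps)
    moreover have "s \<ge> 0" using A h by (simp add: s_def)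
    ultimately show ?thesis by (simp add: hat_def)
  qed
  have "\<forall>v. Pn n v x = (1 - s) * v (node n i) + s * v (node n (Suc i))"
  proof
    fix v
    have sub: "{i, Suc i} \<subseteq> {0..n}" using ilt by auto
    have "Pn n v x = (\<Sum>j\<in>{i, Suc i}. v (node n j) * hat n j x)"
      unfolding Pn_def by (rule sum.mono_neutral_right) (use sub hat0 in auto)
    also have "\<dots> = (1 - s) * v (node n i) + s * v (node n (Suc i))"
      using hati hati1 by simp
    finally show "Pn n v x = (1 - s) * v (node n i) + s * v (node n (Suc i))" .
  qed
  then show ?thesis using ilt A by (auto simp: s_def h_def)
qed


lemma convex_abs: assumes "0 \<le> s" "s \<le> 1" "\<bar>a\<bar> \<le> c" "\<bar>b\<bar> \<le> c"
  shows "\<bar>(1 - s) * a + s * b\<bar> \<le> (c::real)"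
proof -
  have "\<bar>(1 - s) * a + s * b\<bar> \<le> (1 - s) * \<bar>a\<bar> + s * \<bar>b\<bar>"
    using assms by (simp add: abs_mult order_trans[OF abs_triangle_ineq])
  also have "\<dots> \<le> (1 - s) * c + s * c"
    using assms by (intro add_mono mult_left_mono) auto
  finally show ?thesis by (simp add: algebra_simps)
qed

lemma interp_s:
  assumes n: "n \<ge> 1" and x: "x \<in> {-1..1}"
  obtains i s where "i < n" "0 \<le> s" "s \<le> 1" "node n i \<le> x" "x \<le> node n (Suc i)"
    "s * hx n = x - node n i"
    "\<And>v. Pn n v x = (1 - s) * v (node n i) + s * v (node n (Suc i))"
proof -
  obtain i where i: "i<n" "node n i \<le> x" "x \<le> node n (Suc i)"
     "\<forall>v. Pn n v x = (1 - (x - node n i) / hx n) * v (node n i) + ((x - node n i) / hx n) * v (node n (Suc i))"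
    using interp_struct[OF n x] by blast
  have h: "hx n > 0" using hx_pos n by auto
  show ?thesis
  proof (rule that[of i "(x - node n i) / hx n"])
    show "0 \<le> (x - node n i) / hx n" using i h by simp
    show "(x - node n i) / hx n \<le> 1" using i h node_Suc[of n i] by simp
    show "(x - node n i) / hx n * hx n = x - node n i" using h by simp
  qed (use i in auto)
qed

lemma Pn_bound: assumes n: "n \<ge> 1" and x: "x \<in> {-1..1}" and b: "\<And>j. j \<le> n \<Longrightarrow> \<bar>v (node n j)\<bar> \<le> c"
  shows "\<bar>Pn n v x\<bar> \<le> c"
proof -
  obtain i s where iss: "i < n" "0 \<le> s" "s \<le> 1"
    "\<And>v. Pn n v x = (1 - s) * v (node n i) + s * v (node n (Suc i))"
    using interp_s[OF n x] by metis
  show ?thesis using iss b[of i] b[of "Suc i"] by (simp add: convex_abs)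
qed

lemma Pn_diff: "Pn n (\<lambda>y. a y - b y) x = Pn n a x - Pn n b x"
  by (simp add: Pn_def sum_subtractf left_diff_distrib)

lemma Pn_nodes: assumes "\<And>j. j \<le> n \<Longrightarrow> a (node n j) = b (node n j)" shows "Pn n a x = Pn n b x"
  unfolding Pn_def using assms by (intro sum.cong) auto

lemma interp_err_mod:
  assumes n: "n \<ge> 1" and x: "x \<in> {-1..1}"
    and m: "\<And>y. y \<in> {-1..1} \<Longrightarrow> \<bar>y - x\<bar> \<le> hx n \<Longrightarrow> \<bar>v y - v x\<bar> \<le> e"
  shows "\<bar>v x - Pn n v x\<bar> \<le> e"
proof -
  obtain i s where iss: "i < n" "0 \<le> s" "s \<le> 1" "node n i \<le> x" "x \<le> node n (Suc i)"
    "\<And>v. Pn n v x = (1 - s) * v (node n i) + s * v (node n (Suc i))"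
    using interp_s[OF n x] by metis
  have ns: "node n (Suc i) = node n i + hx n" by (rule node_Suc)
  have i1: "node n i \<in> {-1..1}" "node n (Suc i) \<in> {-1..1}" using node_in[OF n] iss by auto
  have a: "\<bar>v (node n i) - v x\<bar> \<le> e" using m[OF i1(1)] iss ns by auto
  have b: "\<bar>v (node n (Suc i)) - v x\<bar> \<le> e" using m[OF i1(2)] iss ns by auto
  have "v x - Pn n v x = - ((1 - s) * (v (node n i) - v x) + s * (v (node n (Suc i)) - v x))"
    using iss(6)[of v] by (simp add: algebra_simps)
  then show ?thesis using convex_abs[OF iss(2,3) a b] by simp
qed

lemma interp_err_C2:
  assumes n: "n \<ge> 1" and x: "x \<in> {-1..1}" and M: "M \<ge> 0"
    and m: "\<And>y. y \<in> {-1..1} \<Longrightarrow> \<bar>v y - v x - (y - x) * D\<bar> \<le> M * (y - x)^2"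
  shows "\<bar>v x - Pn n v x\<bar> \<le> M * (hx n)^2"
proof -
  obtain i s where iss: "i < n" "0 \<le> s" "s \<le> 1" "node n i \<le> x" "x \<le> node n (Suc i)"
    "s * hx n = x - node n i"
    "\<And>v. Pn n v x = (1 - s) * v (node n i) + s * v (node n (Suc i))"
    using interp_s[OF n x] by metis
  have ns: "node n (Suc i) = node n i + hx n" by (rule node_Suc)
  have i1: "node n i \<in> {-1..1}" "node n (Suc i) \<in> {-1..1}" using node_in[OF n] iss by auto
  define r1 where "r1 = v (node n i) - v x - (node n i - x) * D"
  define r2 where "r2 = v (node n (Suc i)) - v x - (node n (Suc i) - x) * D"
  have sq1: "(node n i - x)^2 \<le> (hx n)^2"
    using iss ns hx_pos[OF n] by (subst abs_le_square_iff[symmetric]) auto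
  have sq2: "(node n (Suc i) - x)^2 \<le> (hx n)^2"
    using iss ns hx_pos[OF n] by (subst abs_le_square_iff[symmetric]) auto
  have a: "\<bar>r1\<bar> \<le> M * (hx n)^2" unfolding r1_def
    using m[OF i1(1)] mult_left_mono[OF sq1 M] by linarith
  have b: "\<bar>r2\<bar> \<le> M * (hx n)^2" unfolding r2_def
    using m[OF i1(2)] mult_left_mono[OF sq2 M] by linarith
  have key: "(1 - s) * (node n i - x) + s * (node n (Suc i) - x) = 0"
    using iss(6) ns by (simp add: algebra_simps)
  have "v x - Pn n v x = - ((1 - s) * r1 + s * r2)"
  proof -
    have "(1 - s) * r1 + s * r2 = (1 - s) * v (node n i) + s * v (node n (Suc i)) - v x
        - ((1 - s) * (node n i - x) + s * (node n (Suc i) - x)) * D"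
      unfolding r1_def r2_def by (simp add: algebra_simps)
    then show ?thesis using key iss(7)[of v] by simp
  qed
  then show ?thesis using convex_abs[OF iss(2,3) a b] by simp
qed


lemma taylor_bound:
  fixes v d1 d2 :: "real \<Rightarrow> real"
  assumes C2: "C2_with v d1 d2" and M: "\<And>z. z \<in> {-1..1} \<Longrightarrow> \<bar>d2 z\<bar> \<le> M"
    and x: "x \<in> {-1..1}" and y: "y \<in> {-1..1}"
  shows "\<bar>v y - v x - (y - x) * d1 x\<bar> \<le> M * (y - x)^2"
proof -
  have dv: "\<And>z. z \<in> {-1..1} \<Longrightarrow> (v has_real_derivative d1 z) (at z within {-1..1})"
   and dd: "\<And>z. z \<in> {-1..1} \<Longrightarrow> (d1 has_real_derivative d2 z) (at z within {-1..1})"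
    using C2 unfolding C2_with_def by auto
  have L: "\<bar>d1 z - d1 x\<bar> \<le> M * \<bar>z - x\<bar>" if "z \<in> {-1..1}" for z
    using field_differentiable_bound[of "{-1..1}" d1 d2 M z x] dd M that x by auto
  define S where "S = {min x y..max x y}"
  have S: "S \<subseteq> {-1..1}" "x \<in> S" "y \<in> S" using x y by (auto simp: S_def)
  define g where "g z = v z - z * d1 x" for z
  have dg: "(g has_real_derivative (d1 z - d1 x)) (at z within S)" if "z \<in> S" for z
  proof -
    have "(v has_real_derivative d1 z) (at z within S)"
      using has_field_derivative_subset[OF dv S(1)] that S by auto
    then show ?thesis unfolding g_def
      by (auto intro!: derivative_eq_intros)
  qed
  have bd: "norm (d1 z - d1 x) \<le> M * \<bar>y - x\<bar>" if "z \<in> S" for z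
  proof -
    have "\<bar>z - x\<bar> \<le> \<bar>y - x\<bar>" using that by (auto simp: S_def)
    moreover have "M \<ge> 0" using M[of x] x by auto
    moreover have "z \<in> {-1..1}" using that S by auto
    ultimately show ?thesis using L[of z] by (simp add: order_trans[OF _ mult_left_mono])
  qed
  have "norm (g y - g x) \<le> M * \<bar>y - x\<bar> * norm (y - x)"
    by (rule field_differentiable_bound[of S]) (use dg bd S in \<open>auto simp: S_def\<close>)
  moreover have "g y - g x = v y - v x - (y - x) * d1 x" by (simp add: g_def algebra_simps)
  ultimately show ?thesis by (simp add: power2_eq_square abs_mult_self_eq mult.assoc)
qed


lemma prod_int:
  fixes w :: "real \<Rightarrow> real" and a :: "real \<Rightarrow> real"
  assumes w: "w absolutely_integrable_on {-1..1}" and L: "L-lipschitz_on UNIV f"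
    and ca: "continuous_on {-1..1} a"
  shows "(\<lambda>y. w y * f (a y)) integrable_on {-1..1}"
proof -
  have cf: "continuous_on {-1..1} (\<lambda>y. f (a y))"
    using continuous_on_compose2[OF lipschitz_on_continuous_on[OF L] ca] by auto
  have "(\<lambda>y. f (a y) * w y) absolutely_integrable_on {-1..1}"
  proof (rule absolutely_integrable_bounded_measurable_product_real)
    show "(\<lambda>y. f (a y)) \<in> borel_measurable (lebesgue_on {-1..1})"
      by (rule continuous_imp_measurable_on_sets_lebesgue[OF cf]) auto
    show "bounded ((\<lambda>y. f (a y)) ` {-1..1})"
      using compact_continuous_image[OF cf] compact_imp_bounded by auto
  qed (use w in auto)
  then show ?thesis unfolding absolutely_integrable_on_def by (simp add: mult.commute)
qed

lemma N_lip:
  fixes w :: "real \<Rightarrow> real \<Rightarrow> real" and a b :: "real \<Rightarrow> real"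
  assumes w_int: "\<forall>x\<in>{-1..1}. (\<lambda>y. w x y) absolutely_integrable_on {-1..1}"
    and B: "\<forall>x\<in>{-1..1}. integral {-1..1} (\<lambda>y. \<bar>w x y\<bar>) \<le> B"
    and L: "L-lipschitz_on UNIV f"
    and ca: "continuous_on {-1..1} a" and cb: "continuous_on {-1..1} b"
    and c: "\<And>y. y\<in>{-1..1} \<Longrightarrow> \<bar>a y - b y\<bar> \<le> c"
    and x: "x \<in> {-1..1}"
  shows "\<bar>Nop w f \<xi> t a x - Nop w f \<xi> t b x\<bar> \<le> (1 + L*B) * c"
proof -
  have wx: "(\<lambda>y. w x y) absolutely_integrable_on {-1..1}" using w_int x by auto
  have L0: "L \<ge> 0" using L by (simp add: lipschitz_on_def)
  have c0: "c \<ge> 0" using c[of 0] by auto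
  have ia: "(\<lambda>y. w x y * f (a y)) integrable_on {-1..1}" by (rule prod_int[OF wx L ca])
  have ib: "(\<lambda>y. w x y * f (b y)) integrable_on {-1..1}" by (rule prod_int[OF wx L cb])
  have iw: "(\<lambda>y. \<bar>w x y\<bar>) integrable_on {-1..1}" using wx unfolding absolutely_integrable_on_def by auto
  have "Wop w (Fop f a) x - Wop w (Fop f b) x = integral {-1..1} (\<lambda>y. w x y * f (a y) - w x y * f (b y))"
    unfolding Wop_def Fop_def by (rule integral_diff[OF ia ib, symmetric])
  also have "\<bar>\<dots>\<bar> \<le> integral {-1..1} (\<lambda>y. \<bar>w x y\<bar> * (L * c))"
  proof -
    have "norm (integral {-1..1} (\<lambda>y. w x y * f (a y) - w x y * f (b y))) \<le> integral {-1..1} (\<lambda>y. \<bar>w x y\<bar> * (L * c))"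
    proof (rule integral_norm_bound_integral)
      show "(\<lambda>y. w x y * f (a y) - w x y * f (b y)) integrable_on {-1..1}" using ia ib by (rule integrable_diff)
      show "(\<lambda>y. \<bar>w x y\<bar> * (L * c)) integrable_on {-1..1}" using iw by (rule integrable_on_mult_left)
      fix y :: real assume y: "y \<in> {-1..1}"
      have "\<bar>f (a y) - f (b y)\<bar> \<le> L * \<bar>a y - b y\<bar>"
        using L unfolding lipschitz_on_def by (auto simp: dist_real_def)
      also have "\<dots> \<le> L * c" using c[OF y] L0 by (simp add: mult_left_mono)
      finally have "\<bar>f (a y) - f (b y)\<bar> \<le> L * c" .
      then have "\<bar>w x y\<bar> * \<bar>f (a y) - f (b y)\<bar> \<le> \<bar>w x y\<bar> * (L * c)" by (simp add: mult_left_mono)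
      then show "norm (w x y * f (a y) - w x y * f (b y)) \<le> \<bar>w x y\<bar> * (L * c)"
        by (simp add: abs_mult right_diff_distrib[symmetric])
    qed
    then show ?thesis by simp
  qed
  also have "\<dots> = integral {-1..1} (\<lambda>y. \<bar>w x y\<bar>) * (L * c)" by (rule integral_mult_left)
  also have "\<dots> \<le> B * (L * c)" using B x L0 c0 by (simp add: mult_right_mono)
  finally have W: "\<bar>Wop w (Fop f a) x - Wop w (Fop f b) x\<bar> \<le> B * (L * c)" .
  have "Nop w f \<xi> t a x - Nop w f \<xi> t b x = - (a x - b x) + (Wop w (Fop f a) x - Wop w (Fop f b) x)"
    by (simp add: Nop_def)
  then have "\<bar>Nop w f \<xi> t a x - Nop w f \<xi> t b x\<bar> \<le> \<bar>a x - b x\<bar> + \<bar>Wop w (Fop f a) x - Wop w (Fop f b) x\<bar>"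
    by simp
  also have "\<dots> \<le> c + B * (L * c)" using W c[OF x] by simp
  finally show ?thesis by (simp add: algebra_simps)
qed


lemma supn_diff_le:
  fixes a b :: "real \<Rightarrow> real"
  assumes ca: "continuous_on {-1..1} a" and cb: "continuous_on {-1..1} b"
  shows "\<bar>supn a - supn b\<bar> \<le> supn (\<lambda>x. a x - b x)"
proof -
  have cab: "continuous_on {-1..1} (\<lambda>x. a x - b x)" using ca cb by (intro continuous_intros)
  have "supn a \<le> supn b + supn (\<lambda>x. a x - b x)"
  proof (rule supn_le)
    fix x :: real assume x: "x \<in> {-1..1}"
    have "\<bar>a x\<bar> \<le> \<bar>b x\<bar> + \<bar>a x - b x\<bar>" by linarith
    then show "\<bar>a x\<bar> \<le> supn b + supn (\<lambda>x. a x - b x)"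
      using supn_ge[OF cb x] supn_ge[OF cab x] by linarith
  qed
  moreover have "supn b \<le> supn a + supn (\<lambda>x. a x - b x)"
  proof (rule supn_le)
    fix x :: real assume x: "x \<in> {-1..1}"
    have "\<bar>b x\<bar> \<le> \<bar>a x\<bar> + \<bar>a x - b x\<bar>" by linarith
    then show "\<bar>b x\<bar> \<le> supn a + supn (\<lambda>x. a x - b x)"
      using supn_ge[OF ca x] supn_ge[OF cab x] by linarith
  qed
  ultimately show ?thesis by linarith
qed

lemma main_est:
  fixes G :: "real \<Rightarrow> (real \<Rightarrow> real) \<Rightarrow> (real \<Rightarrow> real)"
    and u U :: "real \<Rightarrow> real \<Rightarrow> real"
  assumes T: "T \<ge> 0" and K: "K \<ge> 0" and n: "n \<ge> 1"
    and u_sol: "is_solution {t0..t0+T} t0 G u0 u"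
    and U_sol: "is_solution {t0..t0+T} t0 (\<lambda>t v. Pn n (G t v)) (Pn n u0) U"
    and NL: "\<And>t a b c x. t \<in> {t0..t0+T} \<Longrightarrow> continuous_on {-1..1} a \<Longrightarrow> continuous_on {-1..1} b \<Longrightarrow>
       (\<And>y. y\<in>{-1..1} \<Longrightarrow> \<bar>a y - b y\<bar> \<le> c) \<Longrightarrow> x \<in> {-1..1} \<Longrightarrow> \<bar>G t a x - G t b x\<bar> \<le> K * c"
    and dl: "\<And>t x. t \<in> {t0..t0+T} \<Longrightarrow> x \<in> {-1..1} \<Longrightarrow> \<bar>u t x - Pn n (u t) x\<bar> \<le> \<delta>"
    and t: "t \<in> {t0..t0+T}" and x: "x \<in> {-1..1}"
  shows "\<bar>u t x - U t x\<bar> \<le> \<delta> * exp (K * T)"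
proof -
  define J where "J = {t0..t0+T}"
  have t0J: "t0 \<in> J" using T by (simp add: J_def)
  have cu: "\<And>s. s \<in> J \<Longrightarrow> continuous_on {-1..1} (u s)"
    and cU: "\<And>s. s \<in> J \<Longrightarrow> continuous_on {-1..1} (U s)"
    and cGu: "\<And>s. s \<in> J \<Longrightarrow> continuous_on {-1..1} (G s (u s))"
    and cGU: "\<And>s. s \<in> J \<Longrightarrow> continuous_on {-1..1} (Pn n (G s (U s)))"
    using u_sol U_sol unfolding is_solution_def contJX_def Xsp_def J_def by auto
  have contu: "contJX J u" and contU: "contJX J U"
    and du: "\<And>s. s\<in>J \<Longrightarrow> X_deriv J u (G s (u s)) s"
    and dU: "\<And>s. s\<in>J \<Longrightarrow> X_deriv J U (Pn n (G s (U s))) s"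
    and iu: "\<And>y. y\<in>{-1..1} \<Longrightarrow> u t0 y = u0 y"
    and iU: "\<And>y. y\<in>{-1..1} \<Longrightarrow> U t0 y = Pn n u0 y"
    using u_sol U_sol unfolding is_solution_def J_def by auto
  define \<phi> where "\<phi> s = supn (\<lambda>x. u s x - U s x)" for s
  have phige: "\<bar>u s y - U s y\<bar> \<le> \<phi> s" if "s \<in> J" "y \<in> {-1..1}" for s y
    unfolding \<phi>_def using that cu cU by (intro supn_ge) (auto intro!: continuous_intros)
  have phicont: "continuous_on J \<phi>"
    unfolding continuous_on_iff
  proof (intro ballI allI impI)
    fix s e assume s: "s \<in> J" and e: "(0::real) < e"
    obtain d1 where d1: "d1 > 0" "\<forall>r\<in>J. \<bar>r - s\<bar> < d1 \<longrightarrow> supn (\<lambda>x. u r x - u s x) < e/2"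
      using contu s e unfolding contJX_def by (meson half_gt_zero)
    obtain d2 where d2: "d2 > 0" "\<forall>r\<in>J. \<bar>r - s\<bar> < d2 \<longrightarrow> supn (\<lambda>x. U r x - U s x) < e/2"
      using contU s e unfolding contJX_def by (meson half_gt_zero)
    show "\<exists>d>0. \<forall>r\<in>J. dist r s < d \<longrightarrow> dist (\<phi> r) (\<phi> s) < e"
    proof (intro exI[of _ "min d1 d2"] conjI ballI impI)
      show "0 < min d1 d2" using d1 d2 by auto
      fix r assume r: "r \<in> J" and dr: "dist r s < min d1 d2"
      have c1: "continuous_on {-1..1} (\<lambda>x. u r x - U r x)" "continuous_on {-1..1} (\<lambda>x. u s x - U s x)"
        using cu cU r s by (auto intro!: continuous_intros)
      have "\<bar>\<phi> r - \<phi> s\<bar> \<le> supn (\<lambda>x. (u r x - U r x) - (u s x - U s x))"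
        unfolding \<phi>_def by (rule supn_diff_le[OF c1])
      also have "\<dots> \<le> supn (\<lambda>x. u r x - u s x) + supn (\<lambda>x. U r x - U s x)"
      proof (rule supn_le)
        fix y :: real assume y: "y \<in> {-1..1}"
        have "\<bar>u r y - u s y\<bar> \<le> supn (\<lambda>x. u r x - u s x)"
          using cu r s y by (intro supn_ge) (auto intro!: continuous_intros)
        moreover have "\<bar>U r y - U s y\<bar> \<le> supn (\<lambda>x. U r x - U s x)"
          using cU r s y by (intro supn_ge) (auto intro!: continuous_intros)
        ultimately show "\<bar>u r y - U r y - (u s y - U s y)\<bar> \<le> supn (\<lambda>x. u r x - u s x) + supn (\<lambda>x. U r x - U s x)"
          by linarith
      qed
      also have "\<dots> < e"
      proof -
        have "\<bar>r - s\<bar> < d1" "\<bar>r - s\<bar> < d2" using dr by (auto simp: dist_real_def)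
        then have "supn (\<lambda>x. u r x - u s x) < e/2" "supn (\<lambda>x. U r x - U s x) < e/2"
          using d1(2) d2(2) r by auto
        then show ?thesis by linarith
      qed
      finally show "dist (\<phi> r) (\<phi> s) < e" by (simp add: dist_real_def)
    qed
  qed
  define \<Phi> where "\<Phi> s = integral {t0..s} (\<lambda>r. K * \<phi> r)" for s
  have dPhi: "(\<Phi> has_real_derivative K * \<phi> s) (at s within J)" if "s \<in> J" for s
    unfolding \<Phi>_def J_def
    by (rule integral_has_real_derivative) (use phicont that J_def in \<open>auto intro!: continuous_intros\<close>)
  have Phi0: "\<Phi> t0 = 0" by (simp add: \<Phi>_def)
  have stepA: "\<bar>Pn n (u s) y - U s y\<bar> \<le> \<Phi> s" if s: "s \<in> J" and y: "y \<in> {-1..1}" for s y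
  proof -
    obtain i \<sigma> where iss: "i < n" "\<And>v. Pn n v y = (1 - \<sigma>) * v (node n i) + \<sigma> * v (node n (Suc i))"
      using interp_s[OF n y] by metis
    have nd: "node n i \<in> {-1..1}" "node n (Suc i) \<in> {-1..1}" using node_in[OF n] iss by auto
    define p where "p r = Pn n (u r) y - U r y" for r
    define p' where "p' r = Pn n (G r (u r)) y - Pn n (G r (U r)) y" for r
    have dp: "(p has_real_derivative p' r) (at r within J)" if r: "r \<in> J" for r
    proof -
      have d1: "((\<lambda>r. u r (node n i)) has_real_derivative G r (u r) (node n i)) (at r within J)"
        by (rule pointwise_deriv[OF contu cGu[OF r] du[OF r] r nd(1)])
      have d2: "((\<lambda>r. u r (node n (Suc i))) has_real_derivative G r (u r) (node n (Suc i))) (at r within J)"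
        by (rule pointwise_deriv[OF contu cGu[OF r] du[OF r] r nd(2)])
      have d3: "((\<lambda>r. U r y) has_real_derivative Pn n (G r (U r)) y) (at r within J)"
        by (rule pointwise_deriv[OF contU cGU[OF r] dU[OF r] r y])
      have "((\<lambda>r. (1 - \<sigma>) * u r (node n i) + \<sigma> * u r (node n (Suc i)) - U r y) has_real_derivative
          (1 - \<sigma>) * G r (u r) (node n i) + \<sigma> * G r (u r) (node n (Suc i)) - Pn n (G r (U r)) y) (at r within J)"
        by (intro DERIV_diff DERIV_add DERIV_cmult d1 d2 d3)
      then show ?thesis unfolding p_def p'_def iss(2) .
    qed
    have bp: "\<bar>p' r\<bar> \<le> K * \<phi> r" if r: "r \<in> J" for r
    proof -
      have "p' r = Pn n (\<lambda>z. G r (u r) z - G r (U r) z) y" unfolding p'_def by (simp add: Pn_diff)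
      also have "\<bar>\<dots>\<bar> \<le> K * \<phi> r"
      proof (rule Pn_bound[OF n y])
        fix j assume j: "j \<le> n"
        show "\<bar>G r (u r) (node n j) - G r (U r) (node n j)\<bar> \<le> K * \<phi> r"
          using NL[of r "u r" "U r" "\<phi> r" "node n j"] r cu cU phige node_in[OF n j] J_def by auto
      qed
      finally show ?thesis .
    qed
    have p0: "p t0 = 0"
    proof -
      have "Pn n (u t0) y = Pn n u0 y" using iu node_in[OF n] by (intro Pn_nodes) auto
      then show ?thesis using iU[OF y] by (simp add: p_def)
    qed
    have sub: "{t0..s} \<subseteq> J" "t0 \<le> s" using s by (auto simp: J_def)
    have "\<Phi> t0 - p t0 \<le> \<Phi> s - p s"
    proof (rule mono_deriv[OF sub(2)])
      fix r assume r: "r \<in> {t0..s}"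
      then have rJ: "r \<in> J" using sub by auto
      show "((\<lambda>r. \<Phi> r - p r) has_real_derivative K * \<phi> r - p' r) (at r within {t0..s})"
        using has_field_derivative_subset[OF DERIV_diff[OF dPhi[OF rJ] dp[OF rJ]] sub(1)] .
      show "0 \<le> K * \<phi> r - p' r" using bp[OF rJ] by linarith
    qed
    moreover have "\<Phi> t0 + p t0 \<le> \<Phi> s + p s"
    proof (rule mono_deriv[OF sub(2)])
      fix r assume r: "r \<in> {t0..s}"
      then have rJ: "r \<in> J" using sub by auto
      show "((\<lambda>r. \<Phi> r + p r) has_real_derivative K * \<phi> r + p' r) (at r within {t0..s})"
        using has_field_derivative_subset[OF DERIV_add[OF dPhi[OF rJ] dp[OF rJ]] sub(1)] .
      show "0 \<le> K * \<phi> r + p' r" using bp[OF rJ] by linarith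
    qed
    ultimately show ?thesis using p0 Phi0 by (simp add: p_def)
  qed
  have stepB: "\<phi> s \<le> \<delta> + \<Phi> s" if s: "s \<in> J" for s
    unfolding \<phi>_def
  proof (rule supn_le)
    fix y :: real assume y: "y \<in> {-1..1}"
    have "\<bar>u s y - U s y\<bar> \<le> \<bar>u s y - Pn n (u s) y\<bar> + \<bar>Pn n (u s) y - U s y\<bar>" by linarith
    then show "\<bar>u s y - U s y\<bar> \<le> \<delta> + \<Phi> s" using dl[of s y] stepA[OF s y] s y J_def by auto
  qed
  have tJ: "t \<in> J" using t J_def by simp
  have sub: "{t0..t} \<subseteq> J" "t0 \<le> t" using t by (auto simp: J_def)
  define H where "H s = (\<Phi> s + \<delta>) * exp (- K * (s - t0))" for s
  have "- H t0 \<le> - H t"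
  proof (rule mono_deriv[OF sub(2)])
    fix r assume r: "r \<in> {t0..t}"
    then have rJ: "r \<in> J" using sub by auto
    have dE: "((\<lambda>s. exp (- K * (s - t0))) has_real_derivative exp (- K * (r - t0)) * (- K)) (at r within {t0..t})"
      by (auto intro!: derivative_eq_intros)
    have "((\<lambda>s. - ((\<Phi> s + \<delta>) * exp (- K * (s - t0)))) has_real_derivative
        - ((K * \<phi> r + 0) * exp (- K * (r - t0)) + (exp (- K * (r - t0)) * (- K)) * (\<Phi> r + \<delta>))) (at r within {t0..t})"
      by (intro DERIV_minus DERIV_mult DERIV_add dE has_field_derivative_subset[OF dPhi[OF rJ] sub(1)] DERIV_const)
    then show "((\<lambda>s. - H s) has_real_derivative
        - ((K * \<phi> r + 0) * exp (- K * (r - t0)) + (exp (- K * (r - t0)) * (- K)) * (\<Phi> r + \<delta>))) (at r within {t0..t})"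
      unfolding H_def .
    have "K * \<phi> r \<le> K * (\<Phi> r + \<delta>)" using stepB[OF rJ] K by (simp add: mult_left_mono add.commute)
    then have "0 \<le> (K * (\<Phi> r + \<delta>) - K * \<phi> r) * exp (- K * (r - t0))" by simp
    then show "0 \<le> - ((K * \<phi> r + 0) * exp (- K * (r - t0)) + (exp (- K * (r - t0)) * (- K)) * (\<Phi> r + \<delta>))"
      by (simp add: algebra_simps)
  qed
  then have Ht: "H t \<le> \<delta>" by (simp add: H_def Phi0)
  have "\<Phi> t + \<delta> = H t * exp (K * (t - t0))"
    by (simp add: H_def mult.assoc exp_add[symmetric])
  also have "\<dots> \<le> \<delta> * exp (K * (t - t0))" using Ht by (simp add: mult_right_mono)
  finally have P: "\<Phi> t + \<delta> \<le> \<delta> * exp (K * (t - t0))" .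
  have d0: "\<delta> \<ge> 0" using dl[of t0 0] t0J J_def by auto
  have "exp (K * (t - t0)) \<le> exp (K * T)" using K t by (simp add: mult_left_mono)
  then have "\<delta> * exp (K * (t - t0)) \<le> \<delta> * exp (K * T)" using d0 by (simp add: mult_left_mono)
  then show ?thesis using phige[OF tJ x] stepB[OF tJ] P by linarith
qed


lemma normCJX_bound:
  fixes E :: "real \<Rightarrow> real \<Rightarrow> real"
  assumes J: "t1 \<in> J" and b: "\<And>t x. t \<in> J \<Longrightarrow> x \<in> {-1..1} \<Longrightarrow> \<bar>E t x\<bar> \<le> c"
  shows "0 \<le> normCJX J E \<and> normCJX J E \<le> c"
proof -
  have s: "supn (E t) \<le> c" if "t \<in> J" for t using b that by (intro supn_le) auto
  have "normCJX J E \<le> c" unfolding normCJX_def using J s by (intro cSUP_least) auto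
  moreover have "0 \<le> normCJX J E"
  proof -
    have "0 \<le> \<bar>E t1 0\<bar>" by simp
    also have "\<dots> \<le> supn (E t1)" using b J by (intro supn_ge_bdd[of _ c]) auto
    also have "\<dots> \<le> normCJX J E" unfolding normCJX_def
      using J s by (intro cSUP_upper) (auto intro!: bdd_aboveI[of _ c])
    finally show ?thesis .
  qed
  ultimately show ?thesis by auto
qed

theorem corollary5p1:
  fixes w :: "real \<Rightarrow> real \<Rightarrow> real" and f :: "real \<Rightarrow> real"
    and \<xi> :: "real \<Rightarrow> real \<Rightarrow> real" and t0 T :: real
    and u0 :: "real \<Rightarrow> real" and u :: "real \<Rightarrow> real \<Rightarrow> real"
    and un :: "nat \<Rightarrow> real \<Rightarrow> real \<Rightarrow> real"
  assumes T_pos: "T > 0"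
    and w_int: "\<forall>x\<in>{-1..1}. (\<lambda>y. w x y) absolutely_integrable_on {-1..1}"
    and w_cont: "\<forall>e>0. \<exists>h>0. \<forall>x\<in>{-1..1}. \<forall>z\<in>{-1..1}. \<bar>x - z\<bar> \<le> h \<longrightarrow>
                   integral {-1..1} (\<lambda>y. \<bar>w x y - w z y\<bar>) \<le> e"
    and w_bdd: "\<exists>B. \<forall>x\<in>{-1..1}. integral {-1..1} (\<lambda>y. \<bar>w x y\<bar>) \<le> B"
    and f_bdd: "bounded (range f)"
    and f_diff: "\<forall>s. f differentiable (at s)"
    and f_lip: "\<exists>L. L-lipschitz_on UNIV f"
    and f'_bdd: "bounded (range (deriv f))"
    and xi_cont: "contJX {t0..t0+T} \<xi>"
    and u0_X: "u0 \<in> Xsp"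
    and u_sol: "is_solution {t0..t0+T} t0 (Nop w f \<xi>) u0 u"
    and un_sol: "\<forall>n\<ge>1. is_solution {t0..t0+T} t0 (\<lambda>t v. Pn n (Nop w f \<xi> t v)) (Pn n u0) (un n)"
  shows "((\<lambda>n. normCJX {t0..t0+T} (\<lambda>t x. u t x - un n t x)) \<longlonglongrightarrow> 0) \<and>
         (in_CJ_C2 {t0..t0+T} u \<longrightarrow>
         (\<exists>\<kappa>>0. \<forall>n\<ge>1. normCJX {t0..t0+T} (\<lambda>t x. u t x - un n t x) \<le> \<kappa> * (hx n)^2))"
proof -
  define J where "J = {t0..t0+T}"
  have t0J: "t0 \<in> J" using T_pos by (simp add: J_def)
  obtain L where L: "L-lipschitz_on UNIV f" using f_lip by blast
  have L0: "L \<ge> 0" using L by (simp add: lipschitz_on_def)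
  obtain B0 where B0: "\<forall>x\<in>{-1..1}. integral {-1..1} (\<lambda>y. \<bar>w x y\<bar>) \<le> B0" using w_bdd by blast
  define B where "B = max B0 0"
  have B: "\<forall>x\<in>{-1..1}. integral {-1..1} (\<lambda>y. \<bar>w x y\<bar>) \<le> B" using B0 by (auto simp: B_def intro: order_trans)
  define K where "K = 1 + L * B"
  have K0: "K \<ge> 0" using L0 by (simp add: K_def B_def)
  have NL: "\<bar>Nop w f \<xi> t a x - Nop w f \<xi> t b x\<bar> \<le> K * c"
    if "continuous_on {-1..1} a" "continuous_on {-1..1} b"
       "\<And>y. y\<in>{-1..1} \<Longrightarrow> \<bar>a y - b y\<bar> \<le> c" "x \<in> {-1..1}" for t a b c x
    unfolding K_def by (rule N_lip[OF w_int B L that])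
  have est: "normCJX J (\<lambda>t x. u t x - un n t x) \<le> \<delta> * exp (K * T) \<and> 0 \<le> normCJX J (\<lambda>t x. u t x - un n t x)"
    if n: "n \<ge> 1" and dl: "\<And>t x. t \<in> J \<Longrightarrow> x \<in> {-1..1} \<Longrightarrow> \<bar>u t x - Pn n (u t) x\<bar> \<le> \<delta>" for n \<delta>
  proof -
    have "\<bar>u t x - un n t x\<bar> \<le> \<delta> * exp (K * T)" if "t \<in> J" "x \<in> {-1..1}" for t x
      by (rule main_est[of T K n t0 "Nop w f \<xi>" u0 u "un n"])
         (use T_pos K0 n u_sol un_sol NL dl that J_def in auto)
    then show ?thesis using normCJX_bound[OF t0J, of "\<lambda>t x. u t x - un n t x"] by auto
  qed
  have part1: "(\<lambda>n. normCJX J (\<lambda>t x. u t x - un n t x)) \<longlonglongrightarrow> 0"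
  proof (rule LIMSEQ_I)
    fix r :: real assume r: "r > 0"
    define \<epsilon> where "\<epsilon> = r / (2 * exp (K * T))"
    have eps: "\<epsilon> > 0" using r by (simp add: \<epsilon>_def)
    have epsr: "\<epsilon> * exp (K * T) < r" using r by (simp add: \<epsilon>_def)
    have uc: "uniformly_continuous_on (J \<times> {-1..1}) (\<lambda>p. u (fst p) (snd p))"
    proof (rule compact_uniformly_continuous)
      show "continuous_on (J \<times> {-1..1}) (\<lambda>p. u (fst p) (snd p))"
        using u_sol unfolding is_solution_def J_def by (intro joint_cont) auto
      show "compact (J \<times> {-1..1::real})" unfolding J_def by (intro compact_Times) auto
    qed
    obtain d where d: "d > 0" "\<forall>p\<in>J \<times> {-1..1}. \<forall>q\<in>J \<times> {-1..1}. dist q p < d \<longrightarrow>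
        dist (u (fst q) (snd q)) (u (fst p) (snd p)) < \<epsilon>"
      using uc eps unfolding uniformly_continuous_on_def by metis
    obtain N :: nat where N: "real N > 2 / d" using reals_Archimedean2 by blast
    show "\<exists>no. \<forall>n\<ge>no. norm (normCJX J (\<lambda>t x. u t x - un n t x) - 0) < r"
    proof (intro exI[of _ "N + 1"] allI impI)
      fix n assume nN: "n \<ge> N + 1"
      then have n: "n \<ge> 1" by simp
      have "hx n < d"
      proof -
        have "real n > 2 / d" using N nN by linarith
        then have "2 < real n * d" using d by (simp add: field_simps)
        then show ?thesis using n by (simp add: hx_def field_simps)
      qed
      have dl: "\<bar>u t x - Pn n (u t) x\<bar> \<le> \<epsilon>" if t: "t \<in> J" and x: "x \<in> {-1..1}" for t x
      proof (rule interp_err_mod[OF n x])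
        fix y assume y: "y \<in> {-1..1}" and yx: "\<bar>y - x\<bar> \<le> hx n"
        have "dist (t, y) (t, x) < d" using yx \<open>hx n < d\<close> by (simp add: dist_Pair_Pair dist_real_def)
        then have "dist (u t y) (u t x) < \<epsilon>" using d(2) t x y by force
        then show "\<bar>u t y - u t x\<bar> \<le> \<epsilon>" by (simp add: dist_real_def)
      qed
      have "normCJX J (\<lambda>t x. u t x - un n t x) \<le> \<epsilon> * exp (K * T) \<and> 0 \<le> normCJX J (\<lambda>t x. u t x - un n t x)"
        by (rule est[OF n dl])
      then show "norm (normCJX J (\<lambda>t x. u t x - un n t x) - 0) < r" using epsr by auto
    qed
  qed
  have part2: "\<exists>\<kappa>>0. \<forall>n\<ge>1. normCJX J (\<lambda>t x. u t x - un n t x) \<le> \<kappa> * (hx n)^2"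
    if C2: "in_CJ_C2 J u"
  proof -
    obtain D1 D2 where D: "\<forall>t\<in>J. C2_with (u t) (D1 t) (D2 t)" "contJX J D2"
      using C2 unfolding in_CJ_C2_def by blast
    have "compact ((\<lambda>p. D2 (fst p) (snd p)) ` (J \<times> {-1..1}))"
      by (rule compact_continuous_image[OF joint_cont[OF D(2)]]) (auto simp: J_def intro!: compact_Times)
    then obtain M0 where M0: "\<forall>z\<in>(\<lambda>p. D2 (fst p) (snd p)) ` (J \<times> {-1..1}). norm z \<le> M0"
      using compact_imp_bounded bounded_iff by metis
    define M where "M = max M0 0"
    have M: "\<bar>D2 t x\<bar> \<le> M" if "t \<in> J" "x \<in> {-1..1}" for t x
      using M0 that unfolding M_def by force
    have M0': "M \<ge> 0" by (simp add: M_def)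
    show ?thesis
    proof (intro exI[of _ "M * exp (K * T) + 1"] conjI allI impI)
      show "0 < M * exp (K * T) + 1" using M0' by (simp add: add_nonneg_pos)
      fix n :: nat assume n: "n \<ge> 1"
      have dl: "\<bar>u t x - Pn n (u t) x\<bar> \<le> M * (hx n)^2" if t: "t \<in> J" and x: "x \<in> {-1..1}" for t x
        by (rule interp_err_C2[OF n x M0', of _ "D1 t x"])
           (rule taylor_bound[of "u t" "D1 t" "D2 t" M], use D t x M in auto)
      have "normCJX J (\<lambda>t x. u t x - un n t x) \<le> M * (hx n)^2 * exp (K * T)"
        using est[OF n dl] by auto
      also have "\<dots> \<le> (M * exp (K * T) + 1) * (hx n)^2" by (simp add: algebra_simps)
      finally show "normCJX J (\<lambda>t x. u t x - un n t x) \<le> (M * exp (K * T) + 1) * (hx n)^2" .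
    qed
  qed
  show ?thesis using part1 part2 unfolding J_def by blast
qed

end
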